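(* Let $Q,P,t,V_1,V_2,\gamma$ and the points $X_q,X_p$ be as in the context. Then $$Q(X_p)P(X_p)+\int_{X_p}^{X_q}P\,dQ \;=\; Q(X_q)P(X_q)+\int_{X_q}^{X_p}Q\,dP \;=\; \big(PQ-V_1(Q)-V_2(P)\big)_0+2t\ln\gamma .$$ This common value is denoted $\mu$.
   Context: Fix integers $d_1,d_2\ge 1$. For complex parameters $\gamma\neq 0$, $\alpha_0,\dots,\alpha_{d_2}$, $\beta_0,\dots,\beta_{d_1}$ put $Q(\lambda)=\gamma\lambda+\sum_{j=0}^{d_2}\alpha_j\lambda^{-j}$ and $P(\lambda)=\frac{\gamma}{\lambda}+\sum_{j=0}^{d_1}\beta_j\lambda^j$, meromorphic functions on the Riemann sphere of $\lambda$. Write $\infty_Q$ for $\lambda=\infty$ and $\infty_P$ for $\lambda=0$. All residues $\mathrm{res}_p\,\omega$ are ordinary residues of meromorphic differentials at the point $p$ (so $\mathrm{res}_{\lambda=\infty}\frac{d\lambda}{\lambda}=-1$). Define $t=\mathrm{res}_{\infty_Q}P\,dQ$ $(=\mathrm{res}_{\infty_P}Q\,dP)$, $u_K=-\mathrm{res}_{\infty_Q}PQ^{-K}dQ$ for $1\le K\le d_1+1$, $v_J=-\mathrm{res}_{\infty_P}QP^{-J}dP$ for $1\le J\le d_2+1$, and $V_1(x)=\sum_{K=1}^{d_1+1}\frac{u_K}{K}x^K$, $V_2(y)=\sum_{J=1}^{d_2+1}\frac{v_J}{J}y^J$; thus $P=V_1'(Q)-\frac tQ+O(Q^{-2})$ near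 $\infty_Q$ and $Q=V_2'(P)-\frac tP+O(P^{-2})$ near $\infty_P$. For a Laurent polynomial $f(\lambda)$, $(f)_0$ denotes its coefficient of $\lambda^0$. The points $X_q,X_p\in\mathbb C^*$ (values of $\lambda$) are defined implicitly by requiring $-V_1(Q(\lambda))+t\ln Q(\lambda)+\int_{X_q}^{\lambda}P\,dQ=O(\lambda^{-1})$ as $\lambda\to\infty$ and $-V_2(P(\lambda))+t\ln P(\lambda)+\int_{X_p}^{\lambda}Q\,dP=O(\lambda)$ as $\lambda\to 0$, for fixed compatible choices of integration paths in $\mathbb C^*$ and of branches of the logarithms (used consistently throughout). *)

theory Defs
  imports "HOL-Complex_Analysis.Complex_Analysis"
begin

definition Qfun :: "complex \<Rightarrow> (nat \<Rightarrow> complex) \<Rightarrow> nat \<Rightarrow> complex \<Rightarrow> complex" where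
  "Qfun \<gamma> \<alpha> d2 = (\<lambda>l. \<gamma> * l + (\<Sum>j\<le>d2. \<alpha> j / l ^ j))"

definition Pfun :: "complex \<Rightarrow> (nat \<Rightarrow> complex) \<Rightarrow> nat \<Rightarrow> complex \<Rightarrow> complex" where
  "Pfun \<gamma> \<beta> d1 = (\<lambda>l. \<gamma> / l + (\<Sum>j\<le>d1. \<beta> j * l ^ j))"

text \<open>Residue at lambda = infinity of the differential f(lambda) d lambda, computed in the
  chart w = 1/lambda: f(lambda) d lambda = - f(1/w) / w^2 dw.\<close>
definition res_inf :: "(complex \<Rightarrow> complex) \<Rightarrow> complex" where
  "res_inf f = residue (\<lambda>w. - f (1 / w) / w ^ 2) 0"

definition laurent_coeff0 :: "(complex \<Rightarrow> complex) \<Rightarrow> complex" where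
  "laurent_coeff0 f = (THE c. \<exists>(a::int \<Rightarrow> complex) (N::nat).
      (\<forall>l. l \<noteq> 0 \<longrightarrow> f l = (\<Sum>k\<in>{- int N..int N}. a k * l powi k)) \<and> a 0 = c)"

end

theory Submission
  imports Defs "HOL-Computational_Algebra.Polynomial"
begin


lemma exp_path_integral:
  assumes der: "\<And>w. (\<Phi> has_field_derivative f (exp w) * exp w) (at w)"
  shows "(f has_contour_integral (\<Phi> b - \<Phi> a)) (\<lambda>s. exp (linepath a b s))"
proof -
  have vd: "((\<lambda>s. exp (linepath a b s)) has_vector_derivative (b - a) * exp (linepath a b x)) (at x)" for x
  proof -
    have "((exp \<circ> linepath a b) has_vector_derivative (b - a) * exp (linepath a b x)) (at x within UNIV)"
      by (rule field_vector_diff_chain_within[OF has_vector_derivative_linepath_within])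
         (rule has_field_derivative_at_within[OF DERIV_exp])
    then show ?thesis by (simp add: o_def)
  qed
  have vd2: "((\<lambda>s. \<Phi> (linepath a b s)) has_vector_derivative (b - a) * (f (exp (linepath a b x)) * exp (linepath a b x))) (at x within {0..1})" for x
  proof -
    have "((\<Phi> \<circ> linepath a b) has_vector_derivative (b - a) * (f (exp (linepath a b x)) * exp (linepath a b x))) (at x within {0..1})"
      by (rule field_vector_diff_chain_within[OF has_vector_derivative_linepath_within])
         (rule has_field_derivative_at_within[OF der])
    then show ?thesis by (simp add: o_def)
  qed
  have ftc: "((\<lambda>x. (b - a) * (f (exp (linepath a b x)) * exp (linepath a b x))) has_integral (\<Phi> (linepath a b 1) - \<Phi> (linepath a b 0))) {0..1}"
    by (rule fundamental_theorem_of_calculus) (auto intro: vd2)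
  have ftc': "((\<lambda>x. (b - a) * (f (exp (linepath a b x)) * exp (linepath a b x))) has_integral (\<Phi> b - \<Phi> a)) {0..1}"
    using ftc by (simp add: linepath_def)
  show ?thesis
    unfolding has_contour_integral_def
  proof (rule has_integral_eq[OF _ ftc'])
    fix x :: real assume "x \<in> {0..1}"
    then have "vector_derivative (\<lambda>s. exp (linepath a b s)) (at x within {0..1}) = (b - a) * exp (linepath a b x)"
      by (intro vector_derivative_at_within_ivl[OF vd]) auto
    then show "(b - a) * (f (exp (linepath a b x)) * exp (linepath a b x)) =
        f (exp (linepath a b x)) * vector_derivative (\<lambda>s. exp (linepath a b s)) (at x within {0..1})"
      by simp
  qed
qed

lemma per_const:
  assumes der: "\<And>w. (\<Phi> has_field_derivative \<phi> w) (at w)"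
    and per: "\<And>w. \<phi> (w + c) = \<phi> w"
  shows "\<Phi> (w + c) - \<Phi> w = \<Phi> c - \<Phi> 0"
proof -
  have "\<And>w. w \<in> UNIV \<Longrightarrow> ((\<lambda>w. \<Phi> (w + c) - \<Phi> w) has_field_derivative 0) (at w within UNIV)"
  proof -
    fix w :: 'a
    have "((\<lambda>w. \<Phi> (w + c) - \<Phi> w) has_field_derivative \<phi> (w + c) * 1 - \<phi> w) (at w)"
      by (intro derivative_intros DERIV_chain2[of \<Phi>] der derivative_eq_intros) auto
    then show "((\<lambda>w. \<Phi> (w + c) - \<Phi> w) has_field_derivative 0) (at w within UNIV)" using per by simp
  qed
  from has_field_derivative_zero_constant[OF convex_UNIV this]
  obtain k where "\<forall>w. \<Phi> (w + c) - \<Phi> w = k" by auto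
  then show ?thesis by (metis add_0)
qed

lemma Re_closed_segment_vert:
  assumes "z \<in> closed_segment (complex_of_real x) (complex_of_real x + 2 * pi * \<i>)"
  shows "Re z = x"
  using assms by (auto simp: closed_segment_def scaleR_conv_of_real algebra_simps)

lemma small_zero:
  fixes d :: real
  assumes "\<And>e. e > 0 \<Longrightarrow> d \<le> e" shows "d \<le> 0"
  using assms[of "d/2"] by (cases "d > 0") auto

lemma avg_lemma:
  fixes D :: "complex \<Rightarrow> complex"
  assumes hol: "D holomorphic_on UNIV" and per: "\<And>w. D (w + 2*pi*\<i>) = D w"
    and small: "\<And>e. e > 0 \<Longrightarrow> \<exists>x0. \<forall>z. Re z = x0 \<longrightarrow> norm (D z - c) \<le> e"
  shows "(D has_contour_integral (2*pi*\<i>*c)) (linepath a (a + 2*pi*\<i>))"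
proof -
  obtain \<Phi> where \<Phi>: "\<And>x. x \<in> UNIV \<Longrightarrow> (\<Phi> has_field_derivative D x) (at x within UNIV)"
    using holomorphic_convex_primitive'[OF convex_UNIV open_UNIV hol] by blast
  have der: "\<And>x. (\<Phi> has_field_derivative D x) (at x)" using \<Phi> by simp
  define I where "I = \<Phi> (2*pi*\<i>) - \<Phi> 0"
  have pc: "\<Phi> (w + 2*pi*\<i>) - \<Phi> w = I" for w
    unfolding I_def by (rule per_const[OF der per])
  have hc: "(D has_contour_integral I) (linepath b (b + 2*pi*\<i>))" for b
    using contour_integral_primitive[OF \<Phi> valid_path_linepath, of b "b + 2*pi*\<i>"] pc[of b] by simp
  have "norm (I - 2*pi*\<i>*c) \<le> 0"
  proof (rule small_zero)
    fix e :: real assume e: "e > 0"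
    obtain x0 where x0: "\<And>z. Re z = x0 \<Longrightarrow> norm (D z - c) \<le> e / (2*pi)"
      using small[of "e/(2*pi)"] e by auto
    have "((\<lambda>z. D z - c) has_contour_integral (I - c * (complex_of_real x0 + 2*pi*\<i> - complex_of_real x0)))
          (linepath (complex_of_real x0) (complex_of_real x0 + 2*pi*\<i>))"
      by (intro has_contour_integral_diff hc has_contour_integral_const_linepath)
    then have "norm (I - c * (complex_of_real x0 + 2*pi*\<i> - complex_of_real x0)) \<le> e / (2*pi) * norm (complex_of_real x0 + 2*pi*\<i> - complex_of_real x0)"
      by (rule has_contour_integral_bound_linepath) (use e in \<open>auto intro!: x0 Re_closed_segment_vert\<close>)
    then show "norm (I - 2*pi*\<i>*c) \<le> e"
      by (simp add: norm_mult algebra_simps)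
  qed
  then have "I = 2*pi*\<i>*c" by simp
  then show ?thesis using hc[of a] by simp
qed

lemma vint_powi:
  "((\<lambda>w. exp w powi k) has_contour_integral (if k = 0 then 2*pi*\<i> else 0)) (linepath a (a + 2*pi*\<i>))"
proof (cases "k = 0")
  case True
  have "((\<lambda>x. 1) has_contour_integral 1 * ((a + 2*pi*\<i>) - a)) (linepath a (a + 2*pi*\<i>))"
    by (rule has_contour_integral_const_linepath)
  then show ?thesis using True by simp
next
  case False
  define \<Phi> where "\<Phi> = (\<lambda>w::complex. exp (of_int k * w) / of_int k)"
  have der: "(\<Phi> has_field_derivative exp w powi k) (at w within UNIV)" for w
  proof -
    have d1: "((\<lambda>w. of_int k * w) has_field_derivative of_int k) (at w)"
      using DERIV_cmult_Id by blast
    have d2: "((\<lambda>w. exp (of_int k * w)) has_field_derivative exp (of_int k * w) * of_int k) (at w)"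
      using DERIV_chain2[OF DERIV_exp d1] .
    have d3: "(\<Phi> has_field_derivative exp (of_int k * w) * of_int k / of_int k) (at w)"
      unfolding \<Phi>_def using DERIV_cdivide[OF d2, of "of_int k"] .
    show ?thesis using d3 False by (simp add: exp_power_int)
  qed
  have "((\<lambda>w. exp w powi k) has_contour_integral (\<Phi> (a + 2*pi*\<i>) - \<Phi> a)) (linepath a (a + 2*pi*\<i>))"
    using contour_integral_primitive[OF der valid_path_linepath] by simp
  moreover have "\<Phi> (a + 2*pi*\<i>) = \<Phi> a"
  proof -
    have "exp (of_int k * (a + 2*pi*\<i>)) = exp (of_int k * a + \<i> * (of_int k * (of_real pi * 2)))"
      by (simp add: algebra_simps)
    also have "\<dots> = exp (of_int k * a)" by (rule exp_plus_2pin)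
    finally show ?thesis unfolding \<Phi>_def by simp
  qed
  ultimately show ?thesis using False by simp
qed

lemma lrep_integral:
  assumes rep: "\<forall>l. l \<noteq> 0 \<longrightarrow> f l = (\<Sum>k\<in>{- int N..int N}. a k * l powi k)"
  shows "((\<lambda>w. f (exp w)) has_contour_integral 2*pi*\<i>*a 0) (linepath x (x + 2*pi*\<i>))"
proof -
  have "((\<lambda>w. \<Sum>k\<in>{- int N..int N}. a k * exp w powi k) has_contour_integral
        (\<Sum>k\<in>{- int N..int N}. a k * (if k = 0 then 2*pi*\<i> else 0))) (linepath x (x + 2*pi*\<i>))"
    by (rule has_contour_integral_sum, simp, rule has_contour_integral_lmul, rule vint_powi)
  moreover have "(\<Sum>k\<in>{- int N..int N}. a k * (if k = 0 then 2*pi*\<i> else 0)) = 2*pi*\<i>*a 0"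
  proof -
    have "(\<lambda>k. a k * (if k = 0 then 2*pi*\<i> else 0)) = (\<lambda>k. if k = 0 then a 0 * (2*pi*\<i>) else 0)"
      by auto
    show ?thesis unfolding \<open>(\<lambda>k. a k * (if k = 0 then 2*pi*\<i> else 0)) = _\<close> by (simp add: sum.delta)
  qed
  ultimately have "((\<lambda>w. \<Sum>k\<in>{- int N..int N}. a k * exp w powi k) has_contour_integral 2*pi*\<i>*a 0) (linepath x (x + 2*pi*\<i>))"
    by simp
  then show ?thesis
  proof (rule has_contour_integral_eq)
    fix w show "(\<Sum>k\<in>{- int N..int N}. a k * exp w powi k) = f (exp w)"
      using rep exp_not_eq_zero by metis
  qed
qed

lemma laurent_coeff0_eq:
  assumes rep: "\<forall>l. l \<noteq> 0 \<longrightarrow> f l = (\<Sum>k\<in>{- int N..int N}. a k * l powi k)"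
  shows "laurent_coeff0 f = a 0"
  unfolding laurent_coeff0_def
proof (rule the_equality)
  show "\<exists>a' N'. (\<forall>l. l \<noteq> 0 \<longrightarrow> f l = (\<Sum>k\<in>{- int N'..int N'}. a' k * l powi k)) \<and> a' 0 = a 0"
    using rep by blast
next
  fix c assume "\<exists>a' N'. (\<forall>l. l \<noteq> 0 \<longrightarrow> f l = (\<Sum>k\<in>{- int N'..int N'}. a' k * l powi k)) \<and> a' 0 = c"
  then obtain a' N' where r': "\<forall>l. l \<noteq> 0 \<longrightarrow> f l = (\<Sum>k\<in>{- int N'..int N'}. a' k * l powi k)" and c: "a' 0 = c"
    by blast
  have "2*pi*\<i>*a' 0 = 2*pi*\<i>*a 0"
    using has_contour_integral_unique[OF lrep_integral[OF r', of 0] lrep_integral[OF rep, of 0]] .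
  then show "c = a 0" using c by simp
qed

definition lp :: "(complex \<Rightarrow> complex) \<Rightarrow> bool" where
  "lp f \<longleftrightarrow> (\<exists>p N. \<forall>l. l \<noteq> 0 \<longrightarrow> f l = poly p l / l ^ N)"

lemma lp_inv_pow: "lp (\<lambda>l. c / l ^ j)"
  unfolding lp_def by (rule exI[of _ "[:c:]"], rule exI[of _ j]) simp

lemma lp_const: "lp (\<lambda>l. c)"
  using lp_inv_pow[of c 0] by simp

lemma lp_id: "lp (\<lambda>l. l)"
  unfolding lp_def by (rule exI[of _ "[:0,1:]"], rule exI[of _ 0]) simp

lemma lp_add:
  assumes "lp f" "lp g" shows "lp (\<lambda>l. f l + g l)"
proof -
  obtain p N where p: "\<forall>l. l \<noteq> 0 \<longrightarrow> f l = poly p l / l ^ N" using assms(1) lp_def by blast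
  obtain q M where q: "\<forall>l. l \<noteq> 0 \<longrightarrow> g l = poly q l / l ^ M" using assms(2) lp_def by blast
  show ?thesis unfolding lp_def
    by (rule exI[of _ "p * monom 1 M + q * monom 1 N"], rule exI[of _ "N + M"])
       (auto simp: p q poly_monom field_simps power_add)
qed

lemma lp_diff:
  assumes "lp f" "lp g" shows "lp (\<lambda>l. f l - g l)"
proof -
  obtain p N where p: "\<forall>l. l \<noteq> 0 \<longrightarrow> f l = poly p l / l ^ N" using assms(1) lp_def by blast
  obtain q M where q: "\<forall>l. l \<noteq> 0 \<longrightarrow> g l = poly q l / l ^ M" using assms(2) lp_def by blast
  show ?thesis unfolding lp_def
    by (rule exI[of _ "p * monom 1 M - q * monom 1 N"], rule exI[of _ "N + M"])
       (auto simp: p q poly_monom field_simps power_add)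
qed

lemma lp_mult:
  assumes "lp f" "lp g" shows "lp (\<lambda>l. f l * g l)"
proof -
  obtain p N where p: "\<forall>l. l \<noteq> 0 \<longrightarrow> f l = poly p l / l ^ N" using assms(1) lp_def by blast
  obtain q M where q: "\<forall>l. l \<noteq> 0 \<longrightarrow> g l = poly q l / l ^ M" using assms(2) lp_def by blast
  show ?thesis unfolding lp_def
    by (rule exI[of _ "p * q"], rule exI[of _ "N + M"])
       (auto simp: p q field_simps power_add)
qed

lemma lp_sum:
  assumes "finite S" "\<And>i. i \<in> S \<Longrightarrow> lp (f i)" shows "lp (\<lambda>l. \<Sum>i\<in>S. f i l)"
  using assms by (induction S rule: finite_induct) (auto intro: lp_add lp_const)

lemma lp_pow:
  assumes "lp f" shows "lp (\<lambda>l. f l ^ n)"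
  by (induction n) (auto intro: lp_mult lp_const assms)

lemma lp_comp_poly:
  assumes "lp f" shows "lp (\<lambda>l. \<Sum>K\<in>S. c K * f l ^ K)"
proof (cases "finite S")
  case True
  then show ?thesis by (intro lp_sum lp_mult lp_const lp_pow assms)
next
  case False
  then show ?thesis by (simp add: lp_const)
qed

lemma lp_rep:
  assumes "lp f"
  shows "\<exists>a N. \<forall>l. l \<noteq> 0 \<longrightarrow> f l = (\<Sum>k\<in>{- int N..int N}. a k * l powi k)"
proof -
  obtain p N where p: "\<forall>l. l \<noteq> 0 \<longrightarrow> f l = poly p l / l ^ N" using assms lp_def by blast
  define D where "D = degree p + N"
  define a where "a = (\<lambda>k::int. if 0 \<le> k + int N then coeff p (nat (k + int N)) else 0)"
  have "f l = (\<Sum>k\<in>{- int D..int D}. a k * l powi k)" if l: "l \<noteq> 0" for l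
  proof -
    have "poly p l = (\<Sum>i\<le>D + N. coeff p i * l ^ i)"
      unfolding poly_altdef
      by (rule sum.mono_neutral_left) (auto simp: D_def coeff_eq_0)
    then have "f l = (\<Sum>i\<le>D + N. coeff p i * l powi (int i - int N))"
      using p l by (simp add: sum_divide_distrib power_int_diff)
    also have "\<dots> = (\<Sum>i\<in>{0..D + N}. a (int i - int N) * l powi (int i - int N))"
      by (intro sum.cong) (auto simp: a_def)
    also have "\<dots> = (\<Sum>k\<in>(\<lambda>i. int i - int N) ` {0..D + N}. a k * l powi k)"
      by (rule sum.reindex[symmetric, unfolded o_def]) (auto simp: inj_on_def)
    also have "(\<lambda>i. int i - int N) ` {0..D + N} = {- int N..int D}"
    proof (intro set_eqI iffI)
      fix k assume "k \<in> {- int N..int D}"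
      then show "k \<in> (\<lambda>i. int i - int N) ` {0..D + N}"
        by (intro image_eqI[of _ _ "nat (k + int N)"]) auto
    qed auto
    also have "(\<Sum>k\<in>{- int N..int D}. a k * l powi k) = (\<Sum>k\<in>{- int D..int D}. a k * l powi k)"
      by (rule sum.mono_neutral_left) (auto simp: a_def D_def)
    finally show ?thesis .
  qed
  then show ?thesis by blast
qed

lemma exp_per: "exp (w + 2*pi*\<i>) = exp (w::complex)"
  by (simp add: exp_add)


lemma ln_near1:
  assumes "e > 0" shows "\<exists>d>0. \<forall>u. norm (u - 1) < d \<longrightarrow> norm (Ln u) < e"
proof -
  have "continuous (at 1) Ln" by (rule continuous_at_Ln) auto
  then obtain d where "d > 0" "\<forall>u. dist u 1 < d \<longrightarrow> dist (Ln u) (Ln 1) < e"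
    using assms unfolding continuous_at_eps_delta by blast
  then show ?thesis by (auto simp: dist_norm)
qed


lemma ev_exp_small:
  assumes e: "e > 0" shows "eventually (\<lambda>x::real. B * exp (- x) < e) at_top"
  unfolding eventually_at_top_linorder
proof (intro exI allI impI)
  fix x :: real assume x: "x \<ge> ln ((\<bar>B\<bar> + 1) / e)"
  have pos: "(\<bar>B\<bar> + 1) / e > 0" using e by simp
  have "exp (- x) \<le> exp (- ln ((\<bar>B\<bar> + 1) / e))" using x by simp
  also have "\<dots> = e / (\<bar>B\<bar> + 1)" using pos e by (simp add: exp_minus)
  finally have ex: "exp (- x) \<le> e / (\<bar>B\<bar> + 1)" .
  have "B * exp (- x) \<le> \<bar>B\<bar> * exp (- x)" by simp
  also have "\<dots> \<le> \<bar>B\<bar> * (e / (\<bar>B\<bar> + 1))" by (intro mult_left_mono ex) auto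
  also have "\<dots> < e" using e by (simp add: field_simps)
  finally show "B * exp (- x) < e" .
qed

lemma decay_zero:
  fixes c :: complex
  assumes "\<And>x. x \<ge> R \<Longrightarrow> norm c \<le> B * exp (- x)" shows "c = 0"
proof (rule ccontr)
  assume "c \<noteq> 0"
  then have "eventually (\<lambda>x::real. B * exp (- x) < norm c \<and> x \<ge> R) at_top"
    by (intro eventually_conj ev_exp_small eventually_ge_at_top) auto
  then obtain x where "B * exp (- x) < norm c" "x \<ge> R"
    unfolding eventually_at_top_linorder by blast
  then show False using assms by force
qed


lemma Qratio_bound:
  assumes g: "\<gamma> \<noteq> 0" and l: "norm l \<ge> 1"
  shows "norm (Qfun \<gamma> \<alpha> d l / (\<gamma> * l) - 1) \<le> (\<Sum>j\<le>d. norm (\<alpha> j)) / norm \<gamma> / norm l"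
proof -
  have l0: "l \<noteq> 0" using l by auto
  have eq: "Qfun \<gamma> \<alpha> d l / (\<gamma> * l) - 1 = (\<Sum>j\<le>d. \<alpha> j / l ^ j) / (\<gamma> * l)"
    using g l0 unfolding Qfun_def by (simp add: add_divide_distrib)
  have "norm (\<Sum>j\<le>d. \<alpha> j / l ^ j) \<le> (\<Sum>j\<le>d. norm (\<alpha> j / l ^ j))" by (rule norm_sum)
  also have "\<dots> \<le> (\<Sum>j\<le>d. norm (\<alpha> j))"
  proof (rule sum_mono)
    fix j
    have "1 \<le> norm l ^ j" using l by (simp add: one_le_power)
    then show "norm (\<alpha> j / l ^ j) \<le> norm (\<alpha> j)"
      by (simp add: norm_divide norm_power divide_le_eq mult_le_cancel_left1 l0)
  qed
  finally have "norm (\<Sum>j\<le>d. \<alpha> j / l ^ j) \<le> (\<Sum>j\<le>d. norm (\<alpha> j))" .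
  then have "norm (\<Sum>j\<le>d. \<alpha> j / l ^ j) / (norm \<gamma> * norm l) \<le> (\<Sum>j\<le>d. norm (\<alpha> j)) / (norm \<gamma> * norm l)"
    by (rule divide_right_mono) simp
  then show ?thesis unfolding eq by (simp add: norm_divide norm_mult divide_divide_eq_left)
qed


lemma Pratio_bound:
  assumes g: "\<gamma> \<noteq> 0" and l0: "l \<noteq> 0" and l: "norm l \<le> 1"
  shows "norm (Pfun \<gamma> \<beta> d l * l / \<gamma> - 1) \<le> (\<Sum>j\<le>d. norm (\<beta> j)) / norm \<gamma> * norm l"
proof -
  have eq: "Pfun \<gamma> \<beta> d l * l / \<gamma> - 1 = (\<Sum>j\<le>d. \<beta> j * l ^ j) * l / \<gamma>"
  proof -
    have "(\<gamma> / l + (\<Sum>j\<le>d. \<beta> j * l ^ j)) * l = \<gamma> + (\<Sum>j\<le>d. \<beta> j * l ^ j) * l"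
      using l0 by (simp add: distrib_right)
    then show ?thesis using g unfolding Pfun_def by (simp add: add_divide_distrib)
  qed
  have "norm (\<Sum>j\<le>d. \<beta> j * l ^ j) \<le> (\<Sum>j\<le>d. norm (\<beta> j * l ^ j))" by (rule norm_sum)
  also have "\<dots> \<le> (\<Sum>j\<le>d. norm (\<beta> j))"
  proof (rule sum_mono)
    fix j
    have "norm l ^ j \<le> 1" using l by (simp add: power_le_one)
    then show "norm (\<beta> j * l ^ j) \<le> norm (\<beta> j)"
      by (simp add: norm_mult norm_power mult_left_le)
  qed
  finally have "norm (\<Sum>j\<le>d. \<beta> j * l ^ j) \<le> (\<Sum>j\<le>d. norm (\<beta> j))" .
  then have "norm (\<Sum>j\<le>d. \<beta> j * l ^ j) * norm l / norm \<gamma> \<le> (\<Sum>j\<le>d. norm (\<beta> j)) * norm l / norm \<gamma>"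
    by (intro divide_right_mono mult_right_mono) auto
  then show ?thesis unfolding eq by (simp add: norm_divide norm_mult)
qed





theorem lemma2p1:
  fixes d1 d2 :: nat and \<gamma> lg zq zp :: complex and \<alpha> \<beta> :: "nat \<Rightarrow> complex"
    and Q P V1 V2 :: "complex \<Rightarrow> complex" and t :: complex
  assumes d1: "d1 \<ge> 1" and d2: "d2 \<ge> 1" and \<gamma>: "\<gamma> \<noteq> 0"
    and lg: "exp lg = \<gamma>"
  defines "Q \<equiv> Qfun \<gamma> \<alpha> d2"
    and "P \<equiv> Pfun \<gamma> \<beta> d1"
    and "t \<equiv> res_inf (\<lambda>l. P l * deriv Q l)"
    and "V1 \<equiv> (\<lambda>x. \<Sum>K=1..d1+1.
            (- res_inf (\<lambda>l. P l * inverse (Q l ^ K) * deriv Q l)) / of_nat K * x ^ K)"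
    and "V2 \<equiv> (\<lambda>y. \<Sum>J=1..d2+1.
            (- residue (\<lambda>l. Q l * inverse (P l ^ J) * deriv P l) 0) / of_nat J * y ^ J)"
  assumes Xq: "\<exists>C R. \<forall>z. R \<le> Re z \<longrightarrow>
      cmod (- V1 (Q (exp z)) + t * (lg + z + Ln (Q (exp z) / (\<gamma> * exp z)))
            + contour_integral (\<lambda>s. exp (linepath zq z s)) (\<lambda>l. P l * deriv Q l))
      \<le> C * exp (- Re z)"
    and Xp: "\<exists>C R. \<forall>z. Re z \<le> - R \<longrightarrow>
      cmod (- V2 (P (exp z)) + t * (lg - z + Ln (P (exp z) * exp z / \<gamma>))
            + contour_integral (\<lambda>s. exp (linepath zp z s)) (\<lambda>l. Q l * deriv P l))
      \<le> C * exp (Re z)"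
  shows "Q (exp zp) * P (exp zp)
           + contour_integral (\<lambda>s. exp (linepath zp zq s)) (\<lambda>l. P l * deriv Q l)
         = laurent_coeff0 (\<lambda>l. P l * Q l - V1 (Q l) - V2 (P l)) + 2 * t * lg
       \<and> Q (exp zq) * P (exp zq)
           + contour_integral (\<lambda>s. exp (linepath zq zp s)) (\<lambda>l. Q l * deriv P l)
         = laurent_coeff0 (\<lambda>l. P l * Q l - V1 (Q l) - V2 (P l)) + 2 * t * lg"
proof -
  have oS: "open (-{0::complex})" by auto
  have Qhol: "Q holomorphic_on -{0}" unfolding Q_def Qfun_def by (intro holomorphic_intros) auto
  have Phol: "P holomorphic_on -{0}" unfolding P_def Pfun_def by (intro holomorphic_intros) auto
  have dQ: "(Q has_field_derivative deriv Q l) (at l)" if "l \<noteq> 0" for l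
    using holomorphic_derivI[OF Qhol oS] that by auto
  have dP: "(P has_field_derivative deriv P l) (at l)" if "l \<noteq> 0" for l
    using holomorphic_derivI[OF Phol oS] that by auto
  have dQhol: "deriv Q holomorphic_on -{0}" by (rule holomorphic_deriv[OF Qhol oS])
  have dPhol: "deriv P holomorphic_on -{0}" by (rule holomorphic_deriv[OF Phol oS])
  have comp: "(\<lambda>w. f (exp w)) holomorphic_on UNIV" if "f holomorphic_on -{0}" for f
  proof -
    have "exp holomorphic_on UNIV" by (rule holomorphic_on_exp)
    have "(f \<circ> exp) holomorphic_on UNIV"
      by (rule holomorphic_on_compose_gen[where t="-{0}", OF \<open>exp holomorphic_on UNIV\<close> that]) auto
    then show ?thesis by (simp add: o_def)
  qed
  have Qe: "(\<lambda>w. Q (exp w)) holomorphic_on UNIV" by (rule comp[OF Qhol])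
  have Pe: "(\<lambda>w. P (exp w)) holomorphic_on UNIV" by (rule comp[OF Phol])
  have dQe: "(\<lambda>w. deriv Q (exp w)) holomorphic_on UNIV" by (rule comp[OF dQhol])
  have dPe: "(\<lambda>w. deriv P (exp w)) holomorphic_on UNIV" by (rule comp[OF dPhol])
  define gq where "gq = (\<lambda>w. P (exp w) * deriv Q (exp w) * exp w)"
  define gp where "gp = (\<lambda>w. Q (exp w) * deriv P (exp w) * exp w)"
  have gqh: "gq holomorphic_on UNIV" unfolding gq_def by (intro holomorphic_intros Pe dQe)
  have gph: "gp holomorphic_on UNIV" unfolding gp_def by (intro holomorphic_intros Qe dPe)
  obtain Gq where Gq0: "\<And>x. x \<in> UNIV \<Longrightarrow> (Gq has_field_derivative gq x) (at x within UNIV)"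
    using holomorphic_convex_primitive'[OF convex_UNIV open_UNIV gqh] by blast
  obtain Gp where Gp0: "\<And>x. x \<in> UNIV \<Longrightarrow> (Gp has_field_derivative gp x) (at x within UNIV)"
    using holomorphic_convex_primitive'[OF convex_UNIV open_UNIV gph] by blast
  have Gq: "\<And>w. (Gq has_field_derivative gq w) (at w)" using Gq0 by simp
  have Gp: "\<And>w. (Gp has_field_derivative gp w) (at w)" using Gp0 by simp
  have Iq: "contour_integral (\<lambda>s. exp (linepath a b s)) (\<lambda>l. P l * deriv Q l) = Gq b - Gq a" for a b
    by (rule contour_integral_unique, rule exp_path_integral) (use Gq in \<open>simp add: gq_def\<close>)
  have Ip: "contour_integral (\<lambda>s. exp (linepath a b s)) (\<lambda>l. Q l * deriv P l) = Gp b - Gp a" for a b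
    by (rule contour_integral_unique, rule exp_path_integral) (use Gp in \<open>simp add: gp_def\<close>)
  have dQexp: "((\<lambda>w. Q (exp w)) has_field_derivative deriv Q (exp w) * exp w) (at w)" for w
    using DERIV_chain2[OF dQ DERIV_exp] by simp
  have dPexp: "((\<lambda>w. P (exp w)) has_field_derivative deriv P (exp w) * exp w) (at w)" for w
    using DERIV_chain2[OF dP DERIV_exp] by simp
  have "\<exists>K. \<forall>w\<in>UNIV. Gp w + Gq w - Q (exp w) * P (exp w) = K"
  proof (rule has_field_derivative_zero_constant[OF convex_UNIV])
    fix w :: complex
    have "((\<lambda>w. Gp w + Gq w - Q (exp w) * P (exp w)) has_field_derivative
        gp w + gq w - (deriv Q (exp w) * exp w * P (exp w) + deriv P (exp w) * exp w * Q (exp w))) (at w)"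
      by (intro DERIV_add DERIV_diff Gp Gq DERIV_mult dQexp dPexp)
    moreover have "gp w + gq w - (deriv Q (exp w) * exp w * P (exp w) + deriv P (exp w) * exp w * Q (exp w)) = 0"
      by (simp add: gp_def gq_def algebra_simps)
    ultimately show "((\<lambda>w. Gp w + Gq w - Q (exp w) * P (exp w)) has_field_derivative 0) (at w within UNIV)"
      by simp
  qed
  then obtain K0 where K0: "\<And>w. Gp w + Gq w - Q (exp w) * P (exp w) = K0" by blast
  have gq_per: "gq (w + 2*pi*\<i>) = gq w" for w unfolding gq_def by (simp only: exp_per)
  have gp_per: "gp (w + 2*pi*\<i>) = gp w" for w unfolding gp_def by (simp only: exp_per)
  define kq where "kq = Gq (2*pi*\<i>) - Gq 0"
  define kp where "kp = Gp (2*pi*\<i>) - Gp 0"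
  have kq: "Gq (w + 2*pi*\<i>) = Gq w + kq" for w
    using per_const[OF Gq gq_per, of w] unfolding kq_def by (simp add: algebra_simps)
  have kp: "Gp (w + 2*pi*\<i>) = Gp w + kp" for w
    using per_const[OF Gp gp_per, of w] unfolding kp_def by (simp add: algebra_simps)
  define Eq where "Eq z = - V1 (Q (exp z)) + t * (lg + z + Ln (Q (exp z) / (\<gamma> * exp z))) + (Gq z - Gq zq)" for z
  define Ep where "Ep z = - V2 (P (exp z)) + t * (lg - z + Ln (P (exp z) * exp z / \<gamma>)) + (Gp z - Gp zp)" for z
  obtain Cq Rq where XqB: "\<And>z. Rq \<le> Re z \<Longrightarrow> cmod (Eq z) \<le> Cq * exp (- Re z)"
    using Xq unfolding Eq_def by (simp only: Iq) blast
  obtain Cp Rp where XpB: "\<And>z. Re z \<le> - Rp \<Longrightarrow> cmod (Ep z) \<le> Cp * exp (Re z)"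
    using Xp unfolding Ep_def by (simp only: Ip) blast
  have kq_val: "t * (2*pi*\<i>) + kq = 0"
  proof (rule decay_zero[of Rq _ "2*Cq"])
    fix x :: real assume x: "x \<ge> Rq"
    let ?z = "complex_of_real x"
    have "Eq (?z + 2*pi*\<i>) - Eq ?z = t * (2*pi*\<i>) + kq"
      unfolding Eq_def exp_per kq by (simp add: algebra_simps)
    then have "cmod (t * (2*pi*\<i>) + kq) \<le> cmod (Eq (?z + 2*pi*\<i>)) + cmod (Eq ?z)"
      by (metis norm_triangle_ineq4)
    also have "\<dots> \<le> Cq * exp (- x) + Cq * exp (- x)"
      using XqB[of "?z + 2*pi*\<i>"] XqB[of ?z] x by (intro add_mono) auto
    finally show "cmod (t * (2*pi*\<i>) + kq) \<le> 2 * Cq * exp (- x)" by simp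
  qed
  have kp_val: "kp - t * (2*pi*\<i>) = 0"
  proof (rule decay_zero[of Rp _ "2*Cp"])
    fix x :: real assume x: "x \<ge> Rp"
    let ?z = "complex_of_real (- x)"
    have "Ep (?z + 2*pi*\<i>) - Ep ?z = kp - t * (2*pi*\<i>)"
      unfolding Ep_def exp_per kp by (simp add: algebra_simps)
    then have "cmod (kp - t * (2*pi*\<i>)) \<le> cmod (Ep (?z + 2*pi*\<i>)) + cmod (Ep ?z)"
      by (metis norm_triangle_ineq4)
    also have "\<dots> \<le> Cp * exp (- x) + Cp * exp (- x)"
      using XpB[of "?z + 2*pi*\<i>"] XpB[of ?z] x by (intro add_mono) auto
    finally show "cmod (kp - t * (2*pi*\<i>)) \<le> 2 * Cp * exp (- x)" by simp
  qed
  define Dq where "Dq w = Gq w + t * w - V1 (Q (exp w))" for w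
  define Dp where "Dp w = Gp w - t * w - V2 (P (exp w))" for w
  define cq where "cq = Gq zq - t * lg"
  define cp where "cp = Gp zp - t * lg"
  have Gqh: "Gq holomorphic_on UNIV" using Gq by (auto simp: holomorphic_on_def field_differentiable_def)
  have Gph: "Gp holomorphic_on UNIV" using Gp by (auto simp: holomorphic_on_def field_differentiable_def)
  have V1h: "(\<lambda>w. V1 (Q (exp w))) holomorphic_on UNIV" unfolding V1_def by (intro holomorphic_intros Qe)
  have V2h: "(\<lambda>w. V2 (P (exp w))) holomorphic_on UNIV" unfolding V2_def by (intro holomorphic_intros Pe)
  have Dqh: "Dq holomorphic_on UNIV" unfolding Dq_def[abs_def] by (intro holomorphic_intros Gqh V1h)
  have Dph: "Dp holomorphic_on UNIV" unfolding Dp_def[abs_def] by (intro holomorphic_intros Gph V2h)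
  have Dq_per: "Dq (w + 2*pi*\<i>) = Dq w" for w
    unfolding Dq_def exp_per kq using kq_val by (simp add: algebra_simps)
  have Dp_per: "Dp (w + 2*pi*\<i>) = Dp w" for w
    unfolding Dp_def exp_per kp using kp_val by (simp add: algebra_simps)
  have tb: "norm t * (e / (2 * (norm t + 1))) \<le> e / 2" if "e > 0" for e :: real
  proof -
    have "norm t * (e / (2 * (norm t + 1))) = (e / 2) * (norm t / (norm t + 1))" by simp
    also have "\<dots> \<le> (e / 2) * 1" using that by (intro mult_left_mono) (auto simp: divide_le_eq_1 add_nonneg_pos)
    finally show ?thesis by simp
  qed
  have Dq_small: "\<exists>x0. \<forall>z. Re z = x0 \<longrightarrow> norm (Dq z - cq) \<le> e" if e: "e > 0" for e :: real
  proof -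
    have ep: "e / (2 * (norm t + 1)) > 0" using e by (intro divide_pos_pos) (auto simp: add_nonneg_pos)
    obtain d where d: "d > 0" "\<And>u. norm (u - 1) < d \<Longrightarrow> norm (Ln u) < e / (2 * (norm t + 1))"
      using ln_near1[OF ep] by blast
    define B where "B = (\<Sum>j\<le>d2. norm (\<alpha> j)) / norm \<gamma>"
    have "eventually (\<lambda>x. Cq * exp (- x) < e / 2 \<and> B * exp (- x) < d \<and> x \<ge> Rq \<and> x \<ge> 0) at_top"
      by (intro eventually_conj ev_exp_small eventually_ge_at_top) (use e d in auto)
    then obtain x0 where x0: "Cq * exp (- x0) < e / 2" "B * exp (- x0) < d" "x0 \<ge> Rq" "x0 \<ge> 0"
      unfolding eventually_at_top_linorder by blast
    show ?thesis
    proof (rule exI[of _ x0], intro allI impI)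
      fix z assume z: "Re z = x0"
      have nl: "norm (exp z) = exp x0" using z by simp
      have "norm (Q (exp z) / (\<gamma> * exp z) - 1) \<le> B / norm (exp z)"
        using Qratio_bound[OF \<gamma>, of "exp z" \<alpha> d2] nl x0 unfolding B_def Q_def by simp
      also have "\<dots> = B * exp (- x0)" using nl by (simp add: exp_minus divide_inverse)
      finally have lnb: "norm (Ln (Q (exp z) / (\<gamma> * exp z))) < e / (2 * (norm t + 1))"
        using x0 d by simp
      have "norm (t * Ln (Q (exp z) / (\<gamma> * exp z))) = norm t * norm (Ln (Q (exp z) / (\<gamma> * exp z)))" by (rule norm_mult)
      also have "\<dots> \<le> norm t * (e / (2 * (norm t + 1)))" by (rule mult_left_mono) (use lnb in auto)
      also have "\<dots> \<le> e / 2" by (rule tb[OF e])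
      finally have n2: "norm (t * Ln (Q (exp z) / (\<gamma> * exp z))) \<le> e / 2" .
      have n1: "norm (Eq z) \<le> e / 2" using XqB[of z] z x0 by simp
      have "Dq z - cq = Eq z - t * Ln (Q (exp z) / (\<gamma> * exp z))"
        unfolding Dq_def Eq_def cq_def by (simp add: algebra_simps)
      then have "norm (Dq z - cq) \<le> norm (Eq z) + norm (t * Ln (Q (exp z) / (\<gamma> * exp z)))"
        by (simp add: norm_triangle_ineq4)
      then show "norm (Dq z - cq) \<le> e" using n1 n2 by simp
    qed
  qed
  have Dp_small: "\<exists>x0. \<forall>z. Re z = x0 \<longrightarrow> norm (Dp z - cp) \<le> e" if e: "e > 0" for e :: real
  proof -
    have ep: "e / (2 * (norm t + 1)) > 0" using e by (intro divide_pos_pos) (auto simp: add_nonneg_pos)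
    obtain d where d: "d > 0" "\<And>u. norm (u - 1) < d \<Longrightarrow> norm (Ln u) < e / (2 * (norm t + 1))"
      using ln_near1[OF ep] by blast
    define B where "B = (\<Sum>j\<le>d1. norm (\<beta> j)) / norm \<gamma>"
    have "eventually (\<lambda>x. Cp * exp (- x) < e / 2 \<and> B * exp (- x) < d \<and> x \<ge> Rp \<and> x \<ge> 0) at_top"
      by (intro eventually_conj ev_exp_small eventually_ge_at_top) (use e d in auto)
    then obtain x0 where x0: "Cp * exp (- x0) < e / 2" "B * exp (- x0) < d" "x0 \<ge> Rp" "x0 \<ge> 0"
      unfolding eventually_at_top_linorder by blast
    show ?thesis
    proof (rule exI[of _ "- x0"], intro allI impI)
      fix z assume z: "Re z = - x0"
      have nl: "norm (exp z) = exp (- x0)" using z by simp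
      have "norm (P (exp z) * exp z / \<gamma> - 1) \<le> B * norm (exp z)"
        using Pratio_bound[OF \<gamma>, of "exp z" \<beta> d1] nl x0 unfolding B_def P_def by simp
      also have "\<dots> = B * exp (- x0)" using nl by simp
      finally have lnb: "norm (Ln (P (exp z) * exp z / \<gamma>)) < e / (2 * (norm t + 1))"
        using x0 d by simp
      have "norm (t * Ln (P (exp z) * exp z / \<gamma>)) = norm t * norm (Ln (P (exp z) * exp z / \<gamma>))" by (rule norm_mult)
      also have "\<dots> \<le> norm t * (e / (2 * (norm t + 1)))" by (rule mult_left_mono) (use lnb in auto)
      also have "\<dots> \<le> e / 2" by (rule tb[OF e])
      finally have n2: "norm (t * Ln (P (exp z) * exp z / \<gamma>)) \<le> e / 2" .
      have n1: "norm (Ep z) \<le> e / 2" using XpB[of z] z x0 by simp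
      have "Dp z - cp = Ep z - t * Ln (P (exp z) * exp z / \<gamma>)"
        unfolding Dp_def Ep_def cp_def by (simp add: algebra_simps)
      then have "norm (Dp z - cp) \<le> norm (Ep z) + norm (t * Ln (P (exp z) * exp z / \<gamma>))"
        by (simp add: norm_triangle_ineq4)
      then show "norm (Dp z - cp) \<le> e" using n1 n2 by simp
    qed
  qed
  have avq: "(Dq has_contour_integral 2*pi*\<i>*cq) (linepath 0 (0 + 2*pi*\<i>))"
    by (rule avg_lemma[OF Dqh Dq_per Dq_small])
  have avp: "(Dp has_contour_integral 2*pi*\<i>*cp) (linepath 0 (0 + 2*pi*\<i>))"
    by (rule avg_lemma[OF Dph Dp_per Dp_small])
  have lp_inv1: "lp (\<lambda>l. c / l)" for c using lp_inv_pow[of c 1] by simp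
  have lpQ: "lp Q" unfolding Q_def Qfun_def
    by (intro lp_add lp_mult lp_const lp_id lp_sum lp_inv_pow) auto
  have lpP: "lp P" unfolding P_def Pfun_def
    by (intro lp_add lp_inv1 lp_sum lp_mult lp_const lp_pow lp_id) auto
  have lpV1: "lp (\<lambda>l. V1 (Q l))" unfolding V1_def by (rule lp_comp_poly[OF lpQ])
  have lpV2: "lp (\<lambda>l. V2 (P l))" unfolding V2_def by (rule lp_comp_poly[OF lpP])
  define M where "M = (\<lambda>l. P l * Q l - V1 (Q l) - V2 (P l))"
  have lpM: "lp M" unfolding M_def by (intro lp_diff lp_mult lpP lpQ lpV1 lpV2)
  obtain a N where rep: "\<forall>l. l \<noteq> 0 \<longrightarrow> M l = (\<Sum>k\<in>{- int N..int N}. a k * l powi k)"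
    using lp_rep[OF lpM] by blast
  have m0: "laurent_coeff0 M = a 0" by (rule laurent_coeff0_eq[OF rep])
  have i1: "((\<lambda>w. M (exp w)) has_contour_integral 2*pi*\<i>*a 0) (linepath 0 (0 + 2*pi*\<i>))"
    by (rule lrep_integral[OF rep])
  have "((\<lambda>w. Dp w + Dq w - K0) has_contour_integral (2*pi*\<i>*cp + 2*pi*\<i>*cq - K0 * ((0 + 2*pi*\<i>) - 0))) (linepath 0 (0 + 2*pi*\<i>))"
    by (intro has_contour_integral_diff has_contour_integral_add avp avq has_contour_integral_const_linepath)
  moreover have "Dp w + Dq w - K0 = M (exp w)" for w
    using K0[of w] unfolding Dp_def Dq_def M_def by (simp add: algebra_simps)
  ultimately have i2: "((\<lambda>w. M (exp w)) has_contour_integral (2*pi*\<i>*cp + 2*pi*\<i>*cq - K0 * ((0 + 2*pi*\<i>) - 0))) (linepath 0 (0 + 2*pi*\<i>))"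
    by simp
  have "2*pi*\<i>*a 0 = 2*pi*\<i>*cp + 2*pi*\<i>*cq - K0 * ((0 + 2*pi*\<i>) - 0)"
    using has_contour_integral_unique[OF i1 i2] .
  then have "2*pi*\<i>*a 0 = 2*pi*\<i>*(cp + cq - K0)" by (simp add: algebra_simps)
  then have a0: "a 0 = cp + cq - K0" by simp
  have e1: "Q (exp zp) * P (exp zp) = Gp zp + Gq zp - K0" using K0[of zp] by (simp add: algebra_simps)
  have e2: "Q (exp zq) * P (exp zq) = Gp zq + Gq zq - K0" using K0[of zq] by (simp add: algebra_simps)
  show ?thesis
    unfolding Iq Ip M_def[symmetric] m0 a0 e1 e2 cp_def cq_def by (simp add: algebra_simps)
qed

end
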